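(* Let $\boldsymbol{A}$ be the adjacency matrix of an undirected graph without self-loops on a finite vertex set $\boldsymbol{V}=\{1,\dots,N\}$. Let $\mathcal{R}_e\subset\boldsymbol{V}$ be a nonempty set of egos and $\mathcal{R}_a\subset\boldsymbol{V}\setminus\mathcal{R}_e$ a nonempty set of alters, $n_a=|\mathcal{R}_a|$, each alter $j$ having a unique recruiting ego $e(j)\in\mathcal{R}_e$ with $A_{j\,e(j)}=1$. Let $\widetilde{\boldsymbol{A}}$ have $\widetilde A_{ij}=\widetilde A_{ji}=1$ iff $i\in\mathcal{R}_a$ and $j=e(i)$ (other entries $0$). Let $\boldsymbol{Z}\in\{0,1\}^N$ have independent components with $\Pr(Z_i=1)=p_z\,\mathbb{I}\{i\in\mathcal{R}_e\}$, $p_z\in(0,1)$. Define $F_i=\mathbb{I}\{\sum_{j\neq i}Z_jA_{ij}>0\}$, $\widetilde F_i=\mathbb{I}\{\sum_{j\neq i}Z_j\widetilde A_{ij}>0\}$. Alters $i\in\mathcal{R}_a$ have fixed real potential outcomes $Y_i(0,f)$, $f\in\{0,1\}$, and observed outcome $Y_i=Y_i(0,F_i)$. Let $$IE=\frac1{n_a}\sum_{i\in\mathcal{R}_a}[Y_i(0,1)-Y_i(0,0)],\qquad \widehat{IE}=\frac1{n_a}\sum_{i\in\mathcal{R}_a}\Big[\frac{\mathbb{I}\{\widetilde F_i=1\}Y_i}{p_z}-\frac{\mathbb{I}\{\widetilde F_i=0\}Y_i}{1-p_z}\Big].$$ If $Y_i(0,1)\ge Y_i(0,0)$ for all $i\in\mathcal{R}_a$,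 then $0\le\mathbb{E}_{\boldsymbol{Z}}[\widehat{IE}]\le IE$; if $Y_i(0,1)\le Y_i(0,0)$ for all $i\in\mathcal{R}_a$, then $IE\le\mathbb{E}_{\boldsymbol{Z}}[\widehat{IE}]\le0$.
   Context: Design-based setting: everything except the treatment assignment $\boldsymbol{Z}$ is fixed, and expectations are over $\boldsymbol{Z}$. *)

theory Defs
  imports "HOL-Probability.Probability"
begin

definition Atil :: "nat set \<Rightarrow> (nat \<Rightarrow> nat) \<Rightarrow> nat \<Rightarrow> nat \<Rightarrow> real" where
  "Atil Ralt e i j = (if (i \<in> Ralt \<and> j = e i) \<or> (j \<in> Ralt \<and> i = e j) then 1 else 0)"

definition expo :: "nat set \<Rightarrow> (nat \<Rightarrow> nat \<Rightarrow> real) \<Rightarrow> (nat \<Rightarrow> bool) \<Rightarrow> nat \<Rightarrow> bool" where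
  "expo V A z i = ((\<Sum>j\<in>V - {i}. of_bool (z j) * A i j) > 0)"

definition Zdist :: "nat set \<Rightarrow> nat set \<Rightarrow> real \<Rightarrow> (nat \<Rightarrow> bool) pmf" where
  "Zdist V Rego pz = Pi_pmf V False (\<lambda>i. bernoulli_pmf (if i \<in> Rego then pz else 0))"

definition IE :: "nat set \<Rightarrow> (nat \<Rightarrow> bool \<Rightarrow> real) \<Rightarrow> real" where
  "IE Ralt Y = (1 / real (card Ralt)) * (\<Sum>i\<in>Ralt. Y i True - Y i False)"

definition IEhat :: "nat set \<Rightarrow> (nat \<Rightarrow> nat \<Rightarrow> real) \<Rightarrow> nat set \<Rightarrow> (nat \<Rightarrow> nat)
    \<Rightarrow> real \<Rightarrow> (nat \<Rightarrow> bool \<Rightarrow> real) \<Rightarrow> (nat \<Rightarrow> bool) \<Rightarrow> real" where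
  "IEhat V A Ralt e pz Y z = (1 / real (card Ralt)) *
     (\<Sum>i\<in>Ralt. of_bool (expo V (Atil Ralt e) z i) * Y i (expo V A z i) / pz
             - of_bool (\<not> expo V (Atil Ralt e) z i) * Y i (expo V A z i) / (1 - pz))"

end

theory Submission
  imports Defs
begin

lemma exp_pair_bern:
  fixes h :: "bool \<times> 'a \<Rightarrow> real"
  assumes fin: "finite (set_pmf B)" and p: "0 \<le> p" "p \<le> 1"
  shows "measure_pmf.expectation (pair_pmf (bernoulli_pmf p) B) h
     = p * measure_pmf.expectation B (\<lambda>f. h (True, f))
       + (1 - p) * measure_pmf.expectation B (\<lambda>f. h (False, f))"
proof -
  let ?T = "set_pmf B"
  have "measure_pmf.expectation (pair_pmf (bernoulli_pmf p) B) h
      = (\<Sum>a\<in>UNIV \<times> ?T. h a * pmf (pair_pmf (bernoulli_pmf p) B) a)"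
    by (rule integral_measure_pmf_real) (auto simp: fin)
  also have "\<dots> = (\<Sum>y\<in>UNIV. \<Sum>b\<in>?T. h (y, b) * (pmf (bernoulli_pmf p) y * pmf B b))"
    by (subst sum.cartesian_product) (auto simp: pmf_pair split_beta intro!: sum.cong)
  also have "\<dots> = (\<Sum>b\<in>?T. h (True, b) * (p * pmf B b)) + (\<Sum>b\<in>?T. h (False, b) * ((1 - p) * pmf B b))"
    using p by (simp add: UNIV_bool)
  also have "\<dots> = p * (\<Sum>b\<in>?T. h (True, b) * pmf B b) + (1 - p) * (\<Sum>b\<in>?T. h (False, b) * pmf B b)"
    by (simp add: sum_distrib_left algebra_simps)
  also have "(\<Sum>b\<in>?T. h (True, b) * pmf B b) = measure_pmf.expectation B (\<lambda>f. h (True, f))"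
    by (rule integral_measure_pmf_real[symmetric]) (auto simp: fin)
  also have "(\<Sum>b\<in>?T. h (False, b) * pmf B b) = measure_pmf.expectation B (\<lambda>f. h (False, f))"
    by (rule integral_measure_pmf_real[symmetric]) (auto simp: fin)
  finally show ?thesis .
qed

lemma atil_expo:
  assumes "i \<in> Ralt" "\<forall>j\<in>Ralt. e j \<in> Rego" "i \<notin> Rego" "e i \<in> V" "e i \<noteq> i" "finite V"
  shows "expo V (Atil Ralt e) z i = z (e i)"
proof -
  have "(\<Sum>j\<in>V - {i}. of_bool (z j) * Atil Ralt e i j)
      = (\<Sum>j\<in>V - {i}. if j = e i then of_bool (z (e i)) else 0)"
    using assms by (intro sum.cong) (auto simp: Atil_def)
  also have "\<dots> = of_bool (z (e i))"
    using assms by (simp add: sum.delta')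
  finally show ?thesis unfolding expo_def by simp
qed

lemma A_expo:
  assumes "z (e i)" "A i (e i) = 1" "e i \<in> V - {i}" "\<forall>j\<in>V. A i j \<ge> 0" "finite V"
  shows "expo V A z i"
proof -
  have "(1::real) = of_bool (z (e i)) * A i (e i)" using assms by simp
  also have "\<dots> \<le> (\<Sum>j\<in>V - {i}. of_bool (z j) * A i j)"
    using assms by (intro member_le_sum) auto
  finally show ?thesis unfolding expo_def by simp
qed

lemma term_exp:
  fixes N :: nat and A :: "nat \<Rightarrow> nat \<Rightarrow> real"
    and Rego Ralt :: "nat set" and e :: "nat \<Rightarrow> nat"
    and pz :: real and Y :: "nat \<Rightarrow> bool \<Rightarrow> real"
  assumes A01: "\<forall>i\<in>{1..N}. \<forall>j\<in>{1..N}. A i j \<in> {0, 1}"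
    and Ra_sub: "Ralt \<subseteq> {1..N} - Rego"
    and e_ego: "\<forall>j\<in>Ralt. e j \<in> Rego" and Re_sub: "Rego \<subseteq> {1..N}"
    and e_adj: "\<forall>j\<in>Ralt. A j (e j) = 1"
    and pz: "0 < pz" "pz < 1"
    and i: "i \<in> Ralt"
  shows "\<exists>t. 0 \<le> t \<and> t \<le> 1 \<and>
    measure_pmf.expectation (Zdist {1..N} Rego pz)
      (\<lambda>z. of_bool (expo {1..N} (Atil Ralt e) z i) * Y i (expo {1..N} A z i) / pz
             - of_bool (\<not> expo {1..N} (Atil Ralt e) z i) * Y i (expo {1..N} A z i) / (1 - pz))
    = t * (Y i True - Y i False)"
proof -
  define V where "V = {1..N::nat}"
  define x where "x = e i"
  define P where "P = (\<lambda>j. bernoulli_pmf (if j \<in> Rego then pz else 0))"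
  define B where "B = Pi_pmf (V - {x}) False P"
  define trm where "trm = (\<lambda>z. of_bool (expo V (Atil Ralt e) z i) * Y i (expo V A z i) / pz
             - of_bool (\<not> expo V (Atil Ralt e) z i) * Y i (expo V A z i) / (1 - pz))"
  have iV: "i \<in> V" "i \<notin> Rego" using i Ra_sub by (auto simp: V_def)
  have xV: "x \<in> V" "x \<in> Rego" "x \<noteq> i" using i e_ego Re_sub iV by (auto simp: V_def x_def)
  have finV: "finite V" by (simp add: V_def)
  have Px: "P x = bernoulli_pmf pz" using xV by (simp add: P_def)
  have Vins: "V = insert x (V - {x})" using xV by auto
  have Z: "Zdist V Rego pz = map_pmf (\<lambda>(y,f). f(x:=y)) (pair_pmf (bernoulli_pmf pz) B)"
    unfolding Zdist_def B_def P_def[symmetric] Px[symmetric]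
    by (subst Vins, rule Pi_pmf_insert) (use finV in auto)
  have finB: "finite (set_pmf B)"
    unfolding B_def using finV
    by (subst set_Pi_pmf) (auto intro!: finite_PiE_dflt intro: finite_subset[of _ UNIV])
  have supB: "\<And>f v. f \<in> set_pmf B \<Longrightarrow> v \<notin> V - {x} \<Longrightarrow> f v = False"
    using set_Pi_pmf_subset[of "V - {x}" False P] finV unfolding B_def by auto
  have Anonneg: "\<forall>j\<in>V. A i j \<ge> 0"
  proof
    fix j assume "j \<in> V"
    then have "A i j = 0 \<or> A i j = 1" using A01 iV by (auto simp: V_def)
    then show "A i j \<ge> 0" by auto
  qed
  have at: "\<And>z. expo V (Atil Ralt e) z i = z x"
    unfolding x_def using i e_ego iV xV finV unfolding x_def by (intro atil_expo) auto
  have T: "trm (f(x:=True)) = Y i True / pz" for f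
  proof -
    have "expo V A (f(x:=True)) i"
      using A_expo[of "f(x:=True)" e i A V] e_adj i xV Anonneg finV unfolding x_def by auto
    then show ?thesis unfolding trm_def at by simp
  qed
  have F: "trm (f(x:=False)) = - Y i (expo V A f i) / (1 - pz)" if "f \<in> set_pmf B" for f
  proof -
    have "f(x:=False) = f" using supB[OF that, of x] by (auto simp: fun_eq_iff)
    then show ?thesis unfolding trm_def at using supB[OF that, of x] by simp
  qed
  have "measure_pmf.expectation (Zdist V Rego pz) trm
      = measure_pmf.expectation (pair_pmf (bernoulli_pmf pz) B) (\<lambda>(y,f). trm (f(x:=y)))"
    unfolding Z by (simp add: case_prod_unfold)
  also have "\<dots> = pz * measure_pmf.expectation B (\<lambda>f. trm (f(x:=True)))
       + (1 - pz) * measure_pmf.expectation B (\<lambda>f. trm (f(x:=False)))"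
    using exp_pair_bern[OF finB, of pz "\<lambda>(y,f). trm (f(x:=y))"] pz by simp
  also have "measure_pmf.expectation B (\<lambda>f. trm (f(x:=False)))
      = measure_pmf.expectation B (\<lambda>f. - Y i (expo V A f i) / (1 - pz))"
    by (intro integral_cong_AE) (auto intro!: AE_pmfI simp: F)
  also have "measure_pmf.expectation B (\<lambda>f. - Y i (expo V A f i) / (1 - pz))
      = measure_pmf.expectation B (\<lambda>f. Y i False + of_bool (expo V A f i) * (Y i True - Y i False)) / (pz - 1)"
  proof -
    have "(\<lambda>f. - Y i (expo V A f i) / (1 - pz))
        = (\<lambda>f. (Y i False + of_bool (expo V A f i) * (Y i True - Y i False)) / (pz - 1))"
    proof
      fix f
      show "- Y i (expo V A f i) / (1 - pz) = (Y i False + of_bool (expo V A f i) * (Y i True - Y i False)) / (pz - 1)"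
        using pz by (cases "expo V A f i") (auto simp: field_simps)
    qed
    then show ?thesis by simp
  qed
  finally have eq0: "measure_pmf.expectation (Zdist V Rego pz) trm
     = pz * measure_pmf.expectation B (\<lambda>f. trm (f(x:=True)))
       + (1 - pz) * (measure_pmf.expectation B (\<lambda>f. Y i False + of_bool (expo V A f i) * (Y i True - Y i False)) / (pz - 1))" .
  have e1: "measure_pmf.expectation B (\<lambda>f. trm (f(x:=True))) = Y i True / pz"
    by (simp only: T) simp
  have e2: "measure_pmf.expectation B (\<lambda>f. Y i False + of_bool (expo V A f i) * (Y i True - Y i False))
     = Y i False + measure_pmf.expectation B (\<lambda>f. of_bool (expo V A f i)) * (Y i True - Y i False)"
    by (simp add: integrable_measure_pmf_finite[OF finB])
  have eq: "measure_pmf.expectation (Zdist V Rego pz) trm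
     = Y i True - Y i False - measure_pmf.expectation B (\<lambda>f. of_bool (expo V A f i)) * (Y i True - Y i False)"
    unfolding eq0 e1 e2 using pz by (simp add: field_simps)
  define q where "q = measure_pmf.expectation B (\<lambda>f. of_bool (expo V A f i) :: real)"
  have q0: "0 \<le> q" unfolding q_def by (intro integral_nonneg_AE) auto
  have q1: "q \<le> 1" unfolding q_def
    by (intro measure_pmf.integral_le_const integrable_measure_pmf_finite[OF finB]) auto
  show ?thesis
    by (rule exI[of _ "1 - q"]) (use q0 q1 eq in \<open>auto simp: q_def trm_def V_def algebra_simps\<close>)
qed

theorem mainTheorem4:
  fixes N :: nat and A :: "nat \<Rightarrow> nat \<Rightarrow> real"
    and Rego Ralt :: "nat set" and e :: "nat \<Rightarrow> nat"
    and pz :: real and Y :: "nat \<Rightarrow> bool \<Rightarrow> real"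
  assumes A01: "\<forall>i\<in>{1..N}. \<forall>j\<in>{1..N}. A i j \<in> {0, 1}"
    and Asym: "\<forall>i\<in>{1..N}. \<forall>j\<in>{1..N}. A i j = A j i"
    and Anoloop: "\<forall>i\<in>{1..N}. A i i = 0"
    and Re_sub: "Rego \<subseteq> {1..N}" and Re_ne: "Rego \<noteq> {}"
    and Ra_sub: "Ralt \<subseteq> {1..N} - Rego" and Ra_ne: "Ralt \<noteq> {}"
    and e_ego: "\<forall>j\<in>Ralt. e j \<in> Rego"
    and e_adj: "\<forall>j\<in>Ralt. A j (e j) = 1"
    and pz: "0 < pz" "pz < 1"
  shows "((\<forall>i\<in>Ralt. Y i True \<ge> Y i False) \<longrightarrow>
            0 \<le> measure_pmf.expectation (Zdist {1..N} Rego pz) (IEhat {1..N} A Ralt e pz Y)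
          \<and> measure_pmf.expectation (Zdist {1..N} Rego pz) (IEhat {1..N} A Ralt e pz Y) \<le> IE Ralt Y)
       \<and> ((\<forall>i\<in>Ralt. Y i True \<le> Y i False) \<longrightarrow>
            IE Ralt Y \<le> measure_pmf.expectation (Zdist {1..N} Rego pz) (IEhat {1..N} A Ralt e pz Y)
          \<and> measure_pmf.expectation (Zdist {1..N} Rego pz) (IEhat {1..N} A Ralt e pz Y) \<le> 0)"
proof -
  define V where "V = {1..N::nat}"
  define trm where "trm = (\<lambda>i z. of_bool (expo V (Atil Ralt e) z i) * Y i (expo V A z i) / pz
             - of_bool (\<not> expo V (Atil Ralt e) z i) * Y i (expo V A z i) / (1 - pz))"
  define M where "M = Zdist V Rego pz"
  have finRa: "finite Ralt" using Ra_sub finite_subset by auto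
  have finM: "finite (set_pmf M)" unfolding M_def Zdist_def V_def
    by (subst set_Pi_pmf) (auto intro!: finite_PiE_dflt intro: finite_subset[of _ UNIV])
  have "\<forall>i\<in>Ralt. \<exists>t. 0 \<le> t \<and> t \<le> 1 \<and> measure_pmf.expectation M (trm i) = t * (Y i True - Y i False)"
    using term_exp[OF A01 Ra_sub e_ego Re_sub e_adj pz] unfolding M_def trm_def V_def by blast
  then obtain t where t: "\<And>i. i \<in> Ralt \<Longrightarrow> 0 \<le> t i \<and> t i \<le> 1 \<and> measure_pmf.expectation M (trm i) = t i * (Y i True - Y i False)"
    by metis
  have E: "measure_pmf.expectation M (IEhat V A Ralt e pz Y)
      = (1 / real (card Ralt)) * (\<Sum>i\<in>Ralt. t i * (Y i True - Y i False))"
  proof -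
    have "measure_pmf.expectation M (IEhat V A Ralt e pz Y)
        = (1 / real (card Ralt)) * measure_pmf.expectation M (\<lambda>z. \<Sum>i\<in>Ralt. trm i z)"
      unfolding IEhat_def trm_def by simp
    also have "measure_pmf.expectation M (\<lambda>z. \<Sum>i\<in>Ralt. trm i z) = (\<Sum>i\<in>Ralt. measure_pmf.expectation M (trm i))"
      by (rule Bochner_Integration.integral_sum) (simp add: integrable_measure_pmf_finite[OF finM])
    also have "\<dots> = (\<Sum>i\<in>Ralt. t i * (Y i True - Y i False))"
      using t by (intro sum.cong) auto
    finally show ?thesis .
  qed
  have c: "0 \<le> 1 / real (card Ralt)" by simp
  show ?thesis
    unfolding E[unfolded M_def V_def] IE_def
  proof (intro conjI impI)
    assume h: "\<forall>i\<in>Ralt. Y i True \<ge> Y i False"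
    show "0 \<le> 1 / real (card Ralt) * (\<Sum>i\<in>Ralt. t i * (Y i True - Y i False))"
      using t h by (intro mult_nonneg_nonneg c sum_nonneg) auto
    show "1 / real (card Ralt) * (\<Sum>i\<in>Ralt. t i * (Y i True - Y i False)) \<le> 1 / real (card Ralt) * (\<Sum>i\<in>Ralt. Y i True - Y i False)"
      using t h by (intro mult_left_mono c sum_mono) (auto intro: mult_left_le_one_le)
  next
    assume h: "\<forall>i\<in>Ralt. Y i True \<le> Y i False"
    show "1 / real (card Ralt) * (\<Sum>i\<in>Ralt. t i * (Y i True - Y i False)) \<le> 0"
      using t h by (intro mult_nonneg_nonpos c sum_nonpos) (auto intro: mult_nonneg_nonpos)
    show "1 / real (card Ralt) * (\<Sum>i\<in>Ralt. Y i True - Y i False) \<le> 1 / real (card Ralt) * (\<Sum>i\<in>Ralt. t i * (Y i True - Y i False))"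
    proof (intro mult_left_mono c sum_mono)
      fix i assume "i \<in> Ralt"
      then have "0 \<le> t i" "t i \<le> 1" "Y i True - Y i False \<le> 0" using t h by auto
      then have "(1 - t i) * (Y i True - Y i False) \<le> 0" by (intro mult_nonneg_nonpos) auto
      then show "Y i True - Y i False \<le> t i * (Y i True - Y i False)" by (simp add: algebra_simps)
    qed
  qed
qed

end
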